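(* Let $P$ be an ergodic transition matrix on a finite set $\mathcal{X}$ with stationary distribution $\pi$. For all integers $r,s\ge 1$, $$\big\|(P^\star-\Pi)^{r+s}(P-\Pi)^{r+s}\big\|_\pi\le \big\|(P^\star-\Pi)^{r}(P-\Pi)^{r}\big\|_\pi\,\big\|(P^\star-\Pi)^{s}(P-\Pi)^{s}\big\|_\pi .$$
   Context: $P$ is row-stochastic on finite $\mathcal{X}$, ergodic (primitive), with unique stationary distribution $\pi>0$. $\ell_2(\pi)$ is $\mathbb{R}^{\mathcal{X}}$ with $\langle f,g\rangle_\pi=\sum_x f(x)g(x)\pi(x)$; matrices act on functions by $f\mapsto Af$ and $\|A\|_\pi=\sup_{\|f\|_\pi=1}\|Af\|_\pi$. $P^\star(x,x')=\pi(x')P(x',x)/\pi(x)$ is the adjoint of $P$ in $\ell_2(\pi)$, and $\Pi=\mathbf{1}^\intercal\pi$ (all rows equal $\pi$). *)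

theory Defs
  imports "HOL-Analysis.Analysis"
begin

text \<open>Matrices on a finite state space 'x are elements of real^'x^'x; they act on
functions f :: real^'x (column vectors) by f \<mapsto> A *v f.\<close>

primrec matpow :: "real^'n^'n \<Rightarrow> nat \<Rightarrow> real^'n^'n" where
  "matpow A 0 = mat 1"
| "matpow A (Suc k) = A ** matpow A k"

definition row_stochastic :: "real^'x^'x \<Rightarrow> bool" where
  "row_stochastic P \<longleftrightarrow> (\<forall>x y. P $ x $ y \<ge> 0) \<and> (\<forall>x. (\<Sum>y\<in>UNIV. P $ x $ y) = 1)"

text \<open>Ergodic = primitive: some power has all entries strictly positive.\<close>
definition primitive :: "real^'x^'x \<Rightarrow> bool" where
  "primitive P \<longleftrightarrow> (\<exists>k. \<forall>x y. matpow P k $ x $ y > 0)"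

definition stationary_dist :: "real^'x^'x \<Rightarrow> real^'x \<Rightarrow> bool" where
  "stationary_dist P \<pi> \<longleftrightarrow> (\<forall>x. \<pi> $ x \<ge> 0) \<and> (\<Sum>x\<in>UNIV. \<pi> $ x) = 1 \<and> \<pi> v* P = \<pi>"

definition pi_norm :: "real^'x \<Rightarrow> real^'x \<Rightarrow> real" where
  "pi_norm \<pi> f = sqrt (\<Sum>x\<in>UNIV. (f $ x)^2 * \<pi> $ x)"

definition op_norm_pi :: "real^'x \<Rightarrow> real^'x^'x \<Rightarrow> real" where
  "op_norm_pi \<pi> A = Sup {pi_norm \<pi> (A *v f) | f. pi_norm \<pi> f = 1}"

definition adjoint_pi :: "real^'x \<Rightarrow> real^'x^'x \<Rightarrow> real^'x^'x" where
  "adjoint_pi \<pi> P = (\<chi> x x'. \<pi> $ x' * P $ x' $ x / \<pi> $ x)"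

definition Pi_mat :: "real^'x \<Rightarrow> real^'x^'x" where
  "Pi_mat \<pi> = (\<chi> x x'. \<pi> $ x')"

end

theory Submission imports Defs begin

definition Dv :: "real^'x \<Rightarrow> real^'x \<Rightarrow> real^'x" where
  "Dv \<pi> f = (\<chi> x. sqrt (\<pi>$x) * f$x)"
definition Di :: "real^'x \<Rightarrow> real^'x \<Rightarrow> real^'x" where
  "Di \<pi> g = (\<chi> x. g$x / sqrt (\<pi>$x))"
definition ip :: "real^'x \<Rightarrow> real^'x \<Rightarrow> real^'x \<Rightarrow> real" where
  "ip \<pi> f g = (\<Sum>x\<in>UNIV. f$x * g$x * \<pi>$x)"

lemma ip_Dv: assumes "\<forall>x. \<pi>$x > 0" shows "ip \<pi> f g = inner (Dv \<pi> f) (Dv \<pi> g)"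
  unfolding ip_def inner_vec_def Dv_def
  by (rule sum.cong) (use assms in \<open>auto simp: algebra_simps less_imp_le\<close>)

lemma pi_norm_Dv: assumes "\<forall>x. \<pi>$x > 0" shows "pi_norm \<pi> f = norm (Dv \<pi> f)"
proof -
  have "pi_norm \<pi> f = sqrt (ip \<pi> f f)" unfolding pi_norm_def ip_def by (simp add: power2_eq_square)
  also have "\<dots> = norm (Dv \<pi> f)" using ip_Dv[OF assms] by (simp add: norm_eq_sqrt_inner)
  finally show ?thesis .
qed

lemma ip_self: assumes "\<forall>x. \<pi>$x > 0" shows "ip \<pi> f f = (pi_norm \<pi> f)^2"
  using ip_Dv[OF assms] pi_norm_Dv[OF assms] by (simp add: power2_norm_eq_inner)

lemma ip_cs: assumes "\<forall>x. \<pi>$x > 0" shows "ip \<pi> f g \<le> pi_norm \<pi> f * pi_norm \<pi> g"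
  using ip_Dv[OF assms] pi_norm_Dv[OF assms] norm_cauchy_schwarz by metis

lemma ip_sym: "ip \<pi> f g = ip \<pi> g f"
  unfolding ip_def by (simp add: mult.commute mult.left_commute)

lemma Dv_Di: assumes "\<forall>x. \<pi>$x > 0" shows "Dv \<pi> (Di \<pi> g) = g"
  using assms by (simp add: Dv_def Di_def vec_eq_iff) (metis less_irrefl)

lemma Di_Dv: assumes "\<forall>x. \<pi>$x > 0" shows "Di \<pi> (Dv \<pi> g) = g"
  using assms by (simp add: Dv_def Di_def vec_eq_iff) (metis less_irrefl)

lemma pi_norm_nonneg: assumes "\<forall>x. \<pi>$x > 0" shows "pi_norm \<pi> f \<ge> 0"
  using pi_norm_Dv[OF assms] by simp

lemma pi_norm_zero: assumes "\<forall>x. \<pi>$x > 0" "pi_norm \<pi> f = 0" shows "f = 0"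
proof -
  have "Dv \<pi> f = 0" using assms(2) pi_norm_Dv[OF assms(1)] by simp
  have "f = Di \<pi> (Dv \<pi> f)" using Di_Dv[OF assms(1)] by simp
  also have "\<dots> = Di \<pi> 0" using \<open>Dv \<pi> f = 0\<close> by simp
  also have "\<dots> = 0" by (simp add: Di_def vec_eq_iff)
  finally show ?thesis .
qed

lemma pi_norm_scale: assumes "\<forall>x. \<pi>$x > 0" shows "pi_norm \<pi> (c *\<^sub>R f) = \<bar>c\<bar> * pi_norm \<pi> f"
proof -
  have "Dv \<pi> (c *\<^sub>R f) = c *\<^sub>R Dv \<pi> f" by (simp add: Dv_def vec_eq_iff algebra_simps)
  thus ?thesis using pi_norm_Dv[OF assms] by simp
qed

lemma op_bounded: assumes "\<forall>x. \<pi>$x > 0"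
  shows "\<exists>C. \<forall>f. pi_norm \<pi> (A *v f) \<le> C * pi_norm \<pi> f"
proof -
  define h where "h = (\<lambda>g. Dv \<pi> (A *v Di \<pi> g))"
  have "linear h"
    by (rule linearI) (simp_all add: h_def Dv_def Di_def vec_eq_iff algebra_simps add_divide_distrib
       matrix_vector_mult_def sum.distrib sum_distrib_left)
  then have "bounded_linear h" by (simp add: linear_conv_bounded_linear)
  then obtain K where K: "\<And>g. norm (h g) \<le> norm g * K" using bounded_linear.bounded by blast
  show ?thesis
  proof (intro exI allI)
    fix f
    have "pi_norm \<pi> (A *v f) = norm (h (Dv \<pi> f))" by (simp add: h_def Di_Dv[OF assms] pi_norm_Dv[OF assms])
    also have "\<dots> \<le> K * pi_norm \<pi> f" using K[of "Dv \<pi> f"] by (simp add: pi_norm_Dv[OF assms] mult.commute)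
    finally show "pi_norm \<pi> (A *v f) \<le> K * pi_norm \<pi> f" .
  qed
qed

abbreviation N where "N \<equiv> op_norm_pi"

lemma unit_exists: assumes "(\<Sum>x\<in>UNIV. \<pi> $ x) = 1" shows "pi_norm \<pi> (\<chi> x. 1) = 1"
  using assms by (simp add: pi_norm_def)

lemma op_upper: assumes "\<forall>x. \<pi>$x > 0" "(\<Sum>x\<in>UNIV. \<pi> $ x) = 1"
  shows "pi_norm \<pi> (A *v f) \<le> N \<pi> A * pi_norm \<pi> f" and "N \<pi> A \<ge> 0"
proof -
  let ?S = "{pi_norm \<pi> (A *v f) | f. pi_norm \<pi> f = 1}"
  obtain C where C: "\<And>f. pi_norm \<pi> (A *v f) \<le> C * pi_norm \<pi> f" using op_bounded[OF assms(1)] by blast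
  have bdd: "bdd_above ?S"
  proof (rule bdd_aboveI)
    fix y assume "y \<in> ?S"
    then obtain f where "y = pi_norm \<pi> (A *v f)" "pi_norm \<pi> f = 1" by blast
    then show "y \<le> C" using C[of f] by simp
  qed
  have up: "pi_norm \<pi> (A *v g) \<le> N \<pi> A" if "pi_norm \<pi> g = 1" for g
    unfolding op_norm_pi_def using that by (intro cSup_upper[OF _ bdd]) blast
  show nn: "N \<pi> A \<ge> 0"
    using up[OF unit_exists[OF assms(2)]] pi_norm_nonneg[OF assms(1)] order_trans by blast
  show "pi_norm \<pi> (A *v f) \<le> N \<pi> A * pi_norm \<pi> f"
  proof (cases "pi_norm \<pi> f = 0")
    case True
    then have "f = 0" using pi_norm_zero[OF assms(1)] by blast
    then show ?thesis using True by (simp add: pi_norm_def)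
  next
    case False
    then have pos: "pi_norm \<pi> f > 0" using pi_norm_nonneg[OF assms(1), of f] by linarith
    let ?g = "(1 / pi_norm \<pi> f) *\<^sub>R f"
    have "pi_norm \<pi> ?g = 1" using pos by (simp add: pi_norm_scale[OF assms(1)])
    then have "pi_norm \<pi> (A *v ?g) \<le> N \<pi> A" by (rule up)
    then have "pi_norm \<pi> (A *v f) / pi_norm \<pi> f \<le> N \<pi> A"
      using pos by (simp add: matrix_vector_mult_scaleR pi_norm_scale[OF assms(1)])
    then show ?thesis using pos by (simp add: divide_le_eq mult.commute)
  qed
qed

lemma op_least: assumes "\<forall>x. \<pi>$x > 0" "(\<Sum>x\<in>UNIV. \<pi> $ x) = 1"
  and "\<And>f. pi_norm \<pi> (A *v f) \<le> C * pi_norm \<pi> f"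
  shows "N \<pi> A \<le> C"
  unfolding op_norm_pi_def
  apply (rule cSup_least)
  using unit_exists[OF assms(2)] apply blast
  apply clarify using assms(3) by (metis mult.right_neutral)

lemma op_mult: assumes "\<forall>x. \<pi>$x > 0" "(\<Sum>x\<in>UNIV. \<pi> $ x) = 1"
  shows "N \<pi> (X ** Y) \<le> N \<pi> X * N \<pi> Y"
proof (rule op_least[OF assms])
  fix f
  have "pi_norm \<pi> ((X ** Y) *v f) = pi_norm \<pi> (X *v (Y *v f))" by (simp add: matrix_vector_mul_assoc)
  also have "\<dots> \<le> N \<pi> X * pi_norm \<pi> (Y *v f)" by (rule op_upper[OF assms])
  also have "\<dots> \<le> N \<pi> X * (N \<pi> Y * pi_norm \<pi> f)"
    by (rule mult_left_mono[OF op_upper(1)[OF assms] op_upper(2)[OF assms]])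
  finally show "pi_norm \<pi> ((X ** Y) *v f) \<le> N \<pi> X * N \<pi> Y * pi_norm \<pi> f" by (simp add: mult.assoc)
qed

lemma adj_le: assumes "\<forall>x. \<pi>$x > 0" "(\<Sum>x\<in>UNIV. \<pi> $ x) = 1"
  and adj: "\<And>f g. ip \<pi> (B *v f) g = ip \<pi> f (K *v g)"
  shows "N \<pi> K \<le> N \<pi> B"
proof (rule op_least[OF assms(1,2)])
  fix g
  have "(pi_norm \<pi> (K *v g))^2 = ip \<pi> (K *v g) (K *v g)" by (simp add: ip_self[OF assms(1)])
  also have "\<dots> = ip \<pi> (B *v (K *v g)) g" using adj ip_sym by metis
  also have "\<dots> \<le> pi_norm \<pi> (B *v (K *v g)) * pi_norm \<pi> g" by (rule ip_cs[OF assms(1)])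
  also have "\<dots> \<le> N \<pi> B * pi_norm \<pi> (K *v g) * pi_norm \<pi> g"
    by (rule mult_right_mono[OF op_upper(1)[OF assms(1,2)] pi_norm_nonneg[OF assms(1)]])
  finally have h: "(pi_norm \<pi> (K *v g))^2 \<le> N \<pi> B * pi_norm \<pi> g * pi_norm \<pi> (K *v g)"
    by (simp add: mult_ac)
  show "pi_norm \<pi> (K *v g) \<le> N \<pi> B * pi_norm \<pi> g"
  proof (cases "pi_norm \<pi> (K *v g) = 0")
    case True then show ?thesis
      using op_upper(2)[OF assms(1,2)] pi_norm_nonneg[OF assms(1)] by simp
  next
    case False
    then have "pi_norm \<pi> (K *v g) > 0" using pi_norm_nonneg[OF assms(1), of "K *v g"] by linarith
    then show ?thesis using h by (simp add: power2_eq_square)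
  qed
qed

lemma adj_ge: assumes "\<forall>x. \<pi>$x > 0" "(\<Sum>x\<in>UNIV. \<pi> $ x) = 1"
  and adj: "\<And>f g. ip \<pi> (B *v f) g = ip \<pi> f (K *v g)"
  shows "(N \<pi> B)^2 \<le> N \<pi> (K ** B)"
proof -
  have nn: "N \<pi> (K ** B) \<ge> 0" by (rule op_upper(2)[OF assms(1,2)])
  have "N \<pi> B \<le> sqrt (N \<pi> (K ** B))"
  proof (rule op_least[OF assms(1,2)])
    fix f
    have "(pi_norm \<pi> (B *v f))^2 = ip \<pi> f (K *v (B *v f))" by (simp add: ip_self[OF assms(1)] adj[symmetric])
    also have "\<dots> \<le> pi_norm \<pi> f * pi_norm \<pi> ((K ** B) *v f)" by (simp add: ip_cs[OF assms(1)] matrix_vector_mul_assoc)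
    also have "\<dots> \<le> pi_norm \<pi> f * (N \<pi> (K ** B) * pi_norm \<pi> f)"
      by (rule mult_left_mono[OF op_upper(1)[OF assms(1,2)] pi_norm_nonneg[OF assms(1)]])
    also have "\<dots> = (sqrt (N \<pi> (K ** B)) * pi_norm \<pi> f)^2"
      using nn by (simp add: power_mult_distrib power2_eq_square)
    finally show "pi_norm \<pi> (B *v f) \<le> sqrt (N \<pi> (K ** B)) * pi_norm \<pi> f"
      by (rule power2_le_imp_le) (simp add: nn pi_norm_nonneg[OF assms(1)])
  qed
  then have "(N \<pi> B)^2 \<le> (sqrt (N \<pi> (K ** B)))^2"
    by (rule power_mono) (rule op_upper(2)[OF assms(1,2)])
  then show ?thesis using nn by simp
qed

lemma ip_adj: assumes "\<forall>x. \<pi>$x > 0"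
  shows "ip \<pi> (X *v f) g = ip \<pi> f (adjoint_pi \<pi> X *v g)"
proof -
  have "ip \<pi> (X *v f) g = (\<Sum>x\<in>UNIV. \<Sum>y\<in>UNIV. X$x$y * f$y * g$x * \<pi>$x)"
    by (simp add: ip_def matrix_vector_mult_def sum_distrib_right)
  also have "\<dots> = (\<Sum>y\<in>UNIV. \<Sum>x\<in>UNIV. X$x$y * f$y * g$x * \<pi>$x)" by (rule sum.swap)
  also have "\<dots> = ip \<pi> f (adjoint_pi \<pi> X *v g)"
    unfolding ip_def matrix_vector_mult_def adjoint_pi_def
    apply (simp add: sum_distrib_left sum_distrib_right)
    apply (intro sum.cong refl)
    using assms by (simp add: field_simps less_imp_neq[symmetric])
  finally show ?thesis .
qed

lemma adj_minus: assumes "\<forall>x. \<pi>$x > 0"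
  shows "adjoint_pi \<pi> (P - Pi_mat \<pi>) = adjoint_pi \<pi> P - Pi_mat \<pi>"
  using assms by (simp add: vec_eq_iff adjoint_pi_def Pi_mat_def field_simps less_imp_neq[symmetric])

lemma matpow_comm: "matpow A n ** A = A ** matpow A n"
  by (induction n) (simp_all add: matrix_mul_assoc[symmetric])

lemma matpow_add: "matpow A (m + n) = matpow A m ** matpow A n"
  by (induction m) (simp_all add: matrix_mul_assoc)

lemma ip_pow: assumes "\<And>f g. ip \<pi> (Q *v f) g = ip \<pi> f (Q' *v g)"
  shows "ip \<pi> (matpow Q n *v f) g = ip \<pi> f (matpow Q' n *v g)"
proof (induction n arbitrary: f g)
  case 0 then show ?case by simp
next
  case (Suc n)
  have "ip \<pi> (matpow Q (Suc n) *v f) g = ip \<pi> (Q *v (matpow Q n *v f)) g"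
    by (simp add: matrix_vector_mul_assoc)
  also have "\<dots> = ip \<pi> (matpow Q n *v f) (Q' *v g)" by (rule assms)
  also have "\<dots> = ip \<pi> f (matpow Q' n *v (Q' *v g))" by (rule Suc)
  also have "\<dots> = ip \<pi> f (matpow Q' (Suc n) *v g)"
    by (simp add: matrix_vector_mul_assoc matpow_comm)
  finally show ?case .
qed

theorem mainTheorem3:
  fixes P :: "real^'x^'x" and \<pi> :: "real^'x" and r s :: nat
  assumes "row_stochastic P" and "primitive P"
    and "stationary_dist P \<pi>" and "\<forall>x. \<pi> $ x > 0"
    and "r \<ge> 1" and "s \<ge> 1"
  shows "op_norm_pi \<pi> (matpow (adjoint_pi \<pi> P - Pi_mat \<pi>) (r + s) ** matpow (P - Pi_mat \<pi>) (r + s))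
    \<le> op_norm_pi \<pi> (matpow (adjoint_pi \<pi> P - Pi_mat \<pi>) r ** matpow (P - Pi_mat \<pi>) r)
     * op_norm_pi \<pi> (matpow (adjoint_pi \<pi> P - Pi_mat \<pi>) s ** matpow (P - Pi_mat \<pi>) s)"
proof -
  have pos: "\<forall>x. \<pi> $ x > 0" by fact
  have one: "(\<Sum>x\<in>UNIV. \<pi> $ x) = 1" using assms(3) by (simp add: stationary_dist_def)
  define Q where "Q = P - Pi_mat \<pi>"
  define Q' where "Q' = adjoint_pi \<pi> P - Pi_mat \<pi>"
  have adjQ: "\<And>f g. ip \<pi> (Q *v f) g = ip \<pi> f (Q' *v g)"
    unfolding Q_def Q'_def using ip_adj[OF pos] adj_minus[OF pos] by metis
  have adjn: "\<And>f g. ip \<pi> (matpow Q n *v f) g = ip \<pi> f (matpow Q' n *v g)" for n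
    by (rule ip_pow[OF adjQ])
  let ?B = "\<lambda>n. matpow Q n" and ?K = "\<lambda>n. matpow Q' n"
  have "N \<pi> (?K (r+s) ** ?B (r+s)) \<le> N \<pi> (?K (r+s)) * N \<pi> (?B (r+s))" by (rule op_mult[OF pos one])
  also have "\<dots> \<le> N \<pi> (?B (r+s)) * N \<pi> (?B (r+s))"
    by (rule mult_right_mono[OF adj_le[OF pos one adjn] op_upper(2)[OF pos one]])
  also have "\<dots> \<le> (N \<pi> (?B r) * N \<pi> (?B s)) * (N \<pi> (?B r) * N \<pi> (?B s))"
  proof -
    have a: "N \<pi> (?B (r+s)) \<le> N \<pi> (?B r) * N \<pi> (?B s)"
      unfolding matpow_add by (rule op_mult[OF pos one])
    show ?thesis by (rule mult_mono[OF a a]) (simp_all add: op_upper(2)[OF pos one])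
  qed
  also have "\<dots> = (N \<pi> (?B r))^2 * (N \<pi> (?B s))^2" by (simp add: power2_eq_square mult_ac)
  also have "\<dots> \<le> N \<pi> (?K r ** ?B r) * N \<pi> (?K s ** ?B s)"
    by (rule mult_mono[OF adj_ge[OF pos one adjn] adj_ge[OF pos one adjn]]) (simp_all add: op_upper(2)[OF pos one])
  finally show ?thesis unfolding Q_def Q'_def .
qed

end
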